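(* A countable (finite or infinite) graph is $\mathcal{C}$-$\mathrm{HI}$ if and only if it is a disjoint union of copies of a single complete graph.
   Context: Graphs are simple; subgraphs are induced. A homomorphism of graphs maps edges to edges; an automorphism is a bijective endomorphism whose inverse is a homomorphism. A graph $G$ is $\mathcal{C}$-$\mathrm{HI}$ if every homomorphism from a finite connected induced subgraph of $G$ into $G$ extends to an automorphism of $G$. *)

theory Defs
  imports Main "HOL-Library.Countable_Set" "HOL-Library.Equipollence"
begin

definition simple_graph :: "'a set \<Rightarrow> ('a \<Rightarrow> 'a \<Rightarrow> bool) \<Rightarrow> bool" where
  "simple_graph V E \<longleftrightarrow> (\<forall>x y. E x y \<longrightarrow> x \<in> V \<and> y \<in> V)
     \<and> (\<forall>x y. E x y \<longrightarrow> E y x) \<and> (\<forall>x. \<not> E x x)"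

definition graph_hom_on :: "'a set \<Rightarrow> 'a set \<Rightarrow> ('a \<Rightarrow> 'a \<Rightarrow> bool) \<Rightarrow> ('a \<Rightarrow> 'a) \<Rightarrow> bool" where
  "graph_hom_on S V E f \<longleftrightarrow> f ` S \<subseteq> V \<and> (\<forall>x\<in>S. \<forall>y\<in>S. E x y \<longrightarrow> E (f x) (f y))"

definition graph_aut :: "'a set \<Rightarrow> ('a \<Rightarrow> 'a \<Rightarrow> bool) \<Rightarrow> ('a \<Rightarrow> 'a) \<Rightarrow> bool" where
  "graph_aut V E g \<longleftrightarrow> bij_betw g V V \<and> graph_hom_on V V E g
     \<and> graph_hom_on V V E (inv_into V g)"

definition induced_connected :: "'a set \<Rightarrow> ('a \<Rightarrow> 'a \<Rightarrow> bool) \<Rightarrow> bool" where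
  "induced_connected S E \<longleftrightarrow> S \<noteq> {} \<and>
     (\<forall>x\<in>S. \<forall>y\<in>S. (\<lambda>u v. u \<in> S \<and> v \<in> S \<and> E u v)\<^sup>*\<^sup>* x y)"

definition C_HI :: "'a set \<Rightarrow> ('a \<Rightarrow> 'a \<Rightarrow> bool) \<Rightarrow> bool" where
  "C_HI V E \<longleftrightarrow> (\<forall>S f. S \<subseteq> V \<and> finite S \<and> induced_connected S E \<and> graph_hom_on S V E f
       \<longrightarrow> (\<exists>g. graph_aut V E g \<and> (\<forall>x\<in>S. g x = f x)))"

definition disjoint_union_of_complete :: "'a set \<Rightarrow> ('a \<Rightarrow> 'a \<Rightarrow> bool) \<Rightarrow> bool" where
  "disjoint_union_of_complete V E \<longleftrightarrow> (\<exists>P.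
     \<Union>P = V \<and> (\<forall>B\<in>P. B \<noteq> {}) \<and> (\<forall>B\<in>P. \<forall>B'\<in>P. B \<noteq> B' \<longrightarrow> B \<inter> B' = {})
     \<and> (\<forall>B\<in>P. \<forall>x\<in>B. \<forall>y\<in>B. x \<noteq> y \<longrightarrow> E x y)
     \<and> (\<forall>x y. E x y \<longrightarrow> (\<exists>B\<in>P. x \<in> B \<and> y \<in> B))
     \<and> (\<forall>B\<in>P. \<forall>B'\<in>P. B \<approx> B'))"

end

theory Submission
  imports Defs
begin

lemma diff_finite_eqpoll:
  assumes "finite S" "infinite A" shows "A - S \<approx> A"
  using assms
proof (induction S rule: finite_induct)
  case empty then show ?case by simp
next
  case (insert a S)
  have IH: "A - S \<approx> A" using insert by simp
  show ?case
  proof (cases "a \<in> A - S")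
    case False
    then have "A - insert a S = A - S" by auto
    then show ?thesis using IH by simp
  next
    case True
    have eq: "A - S = insert a (A - insert a S)" using True by auto
    have "infinite (A - insert a S)"
      using insert.prems insert.hyps(1) by (simp add: Diff_infinite_finite)
    then have "insert a (A - insert a S) \<approx> A - insert a S" by (rule infinite_insert_eqpoll)
    then have "A - insert a S \<approx> A - S" using eq by (simp add: eqpoll_sym)
    then show ?thesis using IH by (rule eqpoll_trans)
  qed
qed

lemma extend_bij:
  assumes "B \<approx> B'" "finite S" "S \<subseteq> B" "inj_on f S" "f ` S \<subseteq> B'"
  shows "\<exists>h. bij_betw h B B' \<and> (\<forall>x\<in>S. h x = f x)"
proof -
  have d: "B - S \<approx> B' - f ` S"
  proof (cases "finite B")
    case True
    then have fB': "finite B'" using assms(1) eqpoll_finite_iff by blast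
    have cB: "card B = card B'" using assms(1) True fB' eqpoll_iff_card by blast
    have "card (B - S) = card B - card S" using True assms(3) by (simp add: card_Diff_subset assms(2))
    moreover have "card (B' - f ` S) = card B' - card (f ` S)"
      using assms(5) assms(2) by (simp add: card_Diff_subset)
    moreover have "card (f ` S) = card S" using assms(4) by (simp add: card_image)
    ultimately show ?thesis using True fB' cB by (simp add: eqpoll_iff_card)
  next
    case False
    then have iB': "infinite B'" using assms(1) eqpoll_finite_iff by blast
    have "B - S \<approx> B" using False assms(2) diff_finite_eqpoll by blast
    also have "B \<approx> B'" by fact
    also have "B' \<approx> B' - f ` S" using iB' assms(2) diff_finite_eqpoll eqpoll_sym by blast
    finally show ?thesis .
  qed
  then obtain k where k: "bij_betw k (B - S) (B' - f ` S)" unfolding eqpoll_def by blast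
  define h where "h x = (if x \<in> S then f x else k x)" for x
  have h1: "bij_betw h S (f ` S)"
    using assms(4) unfolding bij_betw_def h_def inj_on_def by auto
  have h2: "bij_betw h (B - S) (B' - f ` S)"
    using k by (rule bij_betw_cong[THEN iffD1, rotated]) (simp add: h_def)
  have "bij_betw h (S \<union> (B - S)) (f ` S \<union> (B' - f ` S))"
    by (rule bij_betw_combine[OF h1 h2]) auto
  moreover have "S \<union> (B - S) = B" using assms(3) by auto
  moreover have "f ` S \<union> (B' - f ` S) = B'" using assms(5) by auto
  ultimately show ?thesis by (auto simp: h_def)
qed

lemma aut_crit:
  assumes "bij_betw g V V" "\<forall>x\<in>V. \<forall>y\<in>V. E x y \<longleftrightarrow> E (g x) (g y)"
  shows "graph_aut V E g"
proof -
  have inv: "bij_betw (inv_into V g) V V" using assms(1) by (rule bij_betw_inv_into)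
  have "graph_hom_on V V E (inv_into V g)"
    unfolding graph_hom_on_def
  proof (intro conjI ballI impI)
    show "inv_into V g ` V \<subseteq> V" using inv by (simp add: bij_betw_def)
  next
    fix x y assume xy: "x \<in> V" "y \<in> V" "E x y"
    have gx: "g (inv_into V g x) = x" using xy(1) assms(1) by (simp add: bij_betw_inv_into_right)
    have gy: "g (inv_into V g y) = y" using xy(2) assms(1) by (simp add: bij_betw_inv_into_right)
    have "inv_into V g x \<in> V" "inv_into V g y \<in> V" using xy inv by (auto simp: bij_betw_def)
    then show "E (inv_into V g x) (inv_into V g y)" using assms(2) gx gy xy(3) by metis
  qed
  moreover have "graph_hom_on V V E g"
    using assms unfolding graph_hom_on_def bij_betw_def by auto
  ultimately show ?thesis using assms(1) unfolding graph_aut_def by blast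
qed

lemma CHI_trans:
  assumes sg: "simple_graph V E" and C: "C_HI V E"
    and xy: "E x y" and yz: "E y z" and xz: "x \<noteq> z"
  shows "E x z"
proof (rule ccontr)
  assume nxz: "\<not> E x z"
  have V: "x \<in> V" "y \<in> V" "z \<in> V" using sg xy yz unfolding simple_graph_def by auto
  have sym: "\<And>a b. E a b \<Longrightarrow> E b a" and irr: "\<And>a. \<not> E a a"
    using sg unfolding simple_graph_def by auto
  have yx: "E y x" and zy: "E z y" using sym xy yz by auto
  have xny: "x \<noteq> y" and ynz: "y \<noteq> z" using irr xy yz by auto
  define S where "S = {x, y, z}"
  define R where "R = (\<lambda>u v. u \<in> S \<and> v \<in> S \<and> E u v)"
  have r1: "R\<^sup>*\<^sup>* x y" "R\<^sup>*\<^sup>* y x" "R\<^sup>*\<^sup>* y z" "R\<^sup>*\<^sup>* z y"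
    using xy yx yz zy unfolding R_def S_def by auto
  have r2: "R\<^sup>*\<^sup>* x z" "R\<^sup>*\<^sup>* z x"
    using r1 rtranclp_trans by metis+
  have conn: "induced_connected S E"
    unfolding induced_connected_def R_def[symmetric] using r1 r2 by (auto simp: S_def)
  define f where "f u = (if u = z then x else u)" for u
  have hom: "graph_hom_on S V E f"
    unfolding graph_hom_on_def S_def f_def using V xy yx nxz sym irr xz ynz by auto
  have "S \<subseteq> V" "finite S" using V by (auto simp: S_def)
  then obtain g where g: "graph_aut V E g" "\<forall>u\<in>S. g u = f u"
    using C conn hom unfolding C_HI_def by blast
  have "g x = g z" using g(2) xz by (auto simp: S_def f_def)
  moreover have "inj_on g V" using g(1) by (simp add: graph_aut_def bij_betw_def)
  ultimately show False using V xz by (meson inj_onD)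
qed

lemma CHI_vertex:
  assumes sg: "simple_graph V E" and C: "C_HI V E" and V: "x \<in> V" "y \<in> V"
  shows "{w. w = x \<or> E x w} \<approx> {w. w = y \<or> E y w}"
proof -
  have conn: "induced_connected {x} E" unfolding induced_connected_def by auto
  have hom: "graph_hom_on {x} V E (\<lambda>_. y)"
    using sg V unfolding graph_hom_on_def simple_graph_def by auto
  have "{x} \<subseteq> V" "finite {x}" using V by auto
  then obtain g where g0: "graph_aut V E g" "\<forall>u\<in>{x}. g u = y"
    using C conn hom unfolding C_HI_def by blast
  then have g: "graph_aut V E g" "g x = y" by auto
  have bij: "bij_betw g V V" and hg: "graph_hom_on V V E g"
    and hi: "graph_hom_on V V E (inv_into V g)" using g(1) by (auto simp: graph_aut_def)
  have sub: "{w. w = x \<or> E x w} \<subseteq> V" using sg V unfolding simple_graph_def by auto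
  have img: "g ` {w. w = x \<or> E x w} = {w. w = y \<or> E y w}"
  proof
    show "g ` {w. w = x \<or> E x w} \<subseteq> {w. w = y \<or> E y w}"
    proof
      fix w assume "w \<in> g ` {w. w = x \<or> E x w}"
      then obtain v where v: "v = x \<or> E x v" "w = g v" by auto
      then show "w \<in> {w. w = y \<or> E y w}"
      proof (cases "v = x")
        case False
        then have "E x v" using v by auto
        moreover have "v \<in> V" using calculation sg unfolding simple_graph_def by auto
        ultimately have "E (g x) (g v)" using hg V unfolding graph_hom_on_def by blast
        then show ?thesis using v g(2) by auto
      qed (use g(2) in auto)
    qed
  next
    show "{w. w = y \<or> E y w} \<subseteq> g ` {w. w = x \<or> E x w}"
    proof
      fix w assume w: "w \<in> {w. w = y \<or> E y w}"
      show "w \<in> g ` {w. w = x \<or> E x w}"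
      proof (cases "w = y")
        case True then show ?thesis using g(2) by auto
      next
        case False
        then have E: "E y w" using w by auto
        then have wV: "w \<in> V" using sg unfolding simple_graph_def by auto
        have "E (inv_into V g y) (inv_into V g w)" using hi E V wV unfolding graph_hom_on_def by auto
        moreover have "inv_into V g y = x" using g(2) V bij by (metis bij_betw_inv_into_left)
        moreover have "g (inv_into V g w) = w" using wV bij by (simp add: bij_betw_inv_into_right)
        ultimately have "inv_into V g w \<in> {w. w = x \<or> E x w}" "w = g (inv_into V g w)" by auto
        then show ?thesis by (rule rev_image_eqI)
      qed
    qed
  qed
  have "bij_betw g {w. w = x \<or> E x w} {w. w = y \<or> E y w}"
    using bij_betw_subset[OF bij sub img] .
  then show ?thesis unfolding eqpoll_def by blast
qed

lemma forward:
  assumes sg: "simple_graph V E" and C: "C_HI V E"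
  shows "disjoint_union_of_complete V E"
proof -
  define N where "N x = {w. w = x \<or> E x w}" for x
  have sym: "\<And>a b. E a b \<Longrightarrow> E b a" and irr: "\<And>a. \<not> E a a"
    and inV: "\<And>a b. E a b \<Longrightarrow> a \<in> V \<and> b \<in> V"
    using sg unfolding simple_graph_def by auto
  have tr: "\<And>a b c. E a b \<Longrightarrow> E b c \<Longrightarrow> a \<noteq> c \<Longrightarrow> E a c"
    using CHI_trans[OF sg C] by blast
  have cl: "\<And>x u w. u \<in> N x \<Longrightarrow> w \<in> N x \<Longrightarrow> u \<noteq> w \<Longrightarrow> E u w"
    unfolding N_def using sym tr by blast
  have same: "\<And>x y z. z \<in> N x \<Longrightarrow> z \<in> N y \<Longrightarrow> N x = N y"
  proof -
    fix x y z assume z: "z \<in> N x" "z \<in> N y"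
    have mem: "x \<in> N y"
    proof (cases "x = y \<or> z = x \<or> z = y")
      case True then show ?thesis using z sym unfolding N_def by auto
    next
      case False
      then have "E x z" "E z y" using z sym unfolding N_def by auto
      then have "E x y" using False tr by blast
      then show ?thesis using sym unfolding N_def by auto
    qed
    have sub: "\<And>a b. a \<in> N b \<Longrightarrow> N a \<subseteq> N b"
    proof
      fix a b w assume a: "a \<in> N b" and w: "w \<in> N a"
      show "w \<in> N b"
      proof (cases "a = b \<or> w = a \<or> w = b")
        case True then show ?thesis using a w unfolding N_def by auto
      next
        case False
        then have "E b a" "E a w" using a w unfolding N_def by auto
        then show ?thesis using False tr unfolding N_def by blast
      qed
    qed
    have "y \<in> N x" using mem sym unfolding N_def by auto
    then show "N x = N y" using sub mem by blast
  qed
  show ?thesis unfolding disjoint_union_of_complete_def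
  proof (intro exI[of _ "N ` V"] conjI)
    show "\<Union> (N ` V) = V" unfolding N_def using inV by auto
    show "\<forall>B\<in>N ` V. B \<noteq> {}" unfolding N_def by auto
    show "\<forall>B\<in>N ` V. \<forall>B'\<in>N ` V. B \<noteq> B' \<longrightarrow> B \<inter> B' = {}" using same by blast
    show "\<forall>B\<in>N ` V. \<forall>x\<in>B. \<forall>y\<in>B. x \<noteq> y \<longrightarrow> E x y" using cl by blast
    show "\<forall>x y. E x y \<longrightarrow> (\<exists>B\<in>N ` V. x \<in> B \<and> y \<in> B)"
      using inV unfolding N_def by blast
    show "\<forall>B\<in>N ` V. \<forall>B'\<in>N ` V. B \<approx> B'"
      using CHI_vertex[OF sg C] unfolding N_def by blast
  qed
qed


lemma aut_from_blocks:
  assumes sg: "simple_graph V E" and U: "\<Union>P = V"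
    and dj: "\<forall>B\<in>P. \<forall>B'\<in>P. B \<noteq> B' \<longrightarrow> B \<inter> B' = {}"
    and cl: "\<forall>B\<in>P. \<forall>x\<in>B. \<forall>y\<in>B. x \<noteq> y \<longrightarrow> E x y"
    and ed: "\<forall>x y. E x y \<longrightarrow> (\<exists>B\<in>P. x \<in> B \<and> y \<in> B)"
    and bij: "bij_betw g V V" and bl: "\<forall>C\<in>P. g ` C \<in> P"
  shows "graph_aut V E g"
proof (rule aut_crit[OF bij], intro ballI)
  fix x y assume x: "x \<in> V" and y: "y \<in> V"
  have irr: "\<And>a. \<not> E a a" using sg unfolding simple_graph_def by auto
  have EV: "\<And>a b. E a b \<longleftrightarrow> a \<noteq> b \<and> (\<exists>B\<in>P. a \<in> B \<and> b \<in> B)"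
    using cl ed irr by blast
  have inj: "inj_on g V" using bij by (simp add: bij_betw_def)
  have neq: "x \<noteq> y \<longleftrightarrow> g x \<noteq> g y" using inj x y by (meson inj_onD)
  have sm: "(\<exists>B\<in>P. x \<in> B \<and> y \<in> B) \<longleftrightarrow> (\<exists>B\<in>P. g x \<in> B \<and> g y \<in> B)"
  proof
    assume "\<exists>B\<in>P. x \<in> B \<and> y \<in> B"
    then show "\<exists>B\<in>P. g x \<in> B \<and> g y \<in> B" using bl by blast
  next
    assume "\<exists>B\<in>P. g x \<in> B \<and> g y \<in> B"
    then obtain D where D: "D \<in> P" "g x \<in> D" "g y \<in> D" by blast
    obtain C1 where C1: "C1 \<in> P" "x \<in> C1" using x U by blast
    obtain C2 where C2: "C2 \<in> P" "y \<in> C2" using y U by blast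
    have "g ` C1 = D" using dj bl C1 D by blast
    moreover have "g ` C2 = D" using dj bl C2 D by blast
    ultimately have "g y \<in> g ` C1" using C2 by auto
    then obtain z where z: "z \<in> C1" "g y = g z" by auto
    have "z \<in> V" using z C1 U by blast
    then have "y = z" using inj y z(2) by (meson inj_onD)
    then show "\<exists>B\<in>P. x \<in> B \<and> y \<in> B" using C1 z by blast
  qed
  show "E x y \<longleftrightarrow> E (g x) (g y)" using EV neq sm by blast
qed

lemma backward:
  assumes sg: "simple_graph V E" and D: "disjoint_union_of_complete V E"
  shows "C_HI V E"
proof -
  obtain P where U: "\<Union>P = V" and ne: "\<forall>B\<in>P. B \<noteq> {}"
    and dj: "\<forall>B\<in>P. \<forall>B'\<in>P. B \<noteq> B' \<longrightarrow> B \<inter> B' = {}"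
    and cl: "\<forall>B\<in>P. \<forall>x\<in>B. \<forall>y\<in>B. x \<noteq> y \<longrightarrow> E x y"
    and ed: "\<forall>x y. E x y \<longrightarrow> (\<exists>B\<in>P. x \<in> B \<and> y \<in> B)"
    and eq: "\<forall>B\<in>P. \<forall>B'\<in>P. B \<approx> B'"
    using D unfolding disjoint_union_of_complete_def by (elim exE conjE) blast
  have irr: "\<And>a. \<not> E a a" using sg unfolding simple_graph_def by auto
  have uniq: "\<And>B C x. B \<in> P \<Longrightarrow> C \<in> P \<Longrightarrow> x \<in> B \<Longrightarrow> x \<in> C \<Longrightarrow> B = C"
    using dj by blast
  show ?thesis unfolding C_HI_def
  proof (intro allI impI)
    fix S f assume A: "S \<subseteq> V \<and> finite S \<and> induced_connected S E \<and> graph_hom_on S V E f"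
    then have SV: "S \<subseteq> V" and fS: "finite S" and conn: "induced_connected S E"
      and hom: "graph_hom_on S V E f" by auto
    obtain s0 where s0: "s0 \<in> S" using conn unfolding induced_connected_def by blast
    obtain B where B: "B \<in> P" "s0 \<in> B" using s0 SV U by blast
    have SB: "S \<subseteq> B"
    proof
      fix u assume u: "u \<in> S"
      have "(\<lambda>u v. u \<in> S \<and> v \<in> S \<and> E u v)\<^sup>*\<^sup>* s0 u"
        using conn s0 u unfolding induced_connected_def by blast
      then show "u \<in> B"
      proof (induction rule: rtranclp_induct)
        case base then show ?case using B by simp
      next
        case (step a b)
        then obtain C where "C \<in> P" "a \<in> C" "b \<in> C" using ed by blast
        then show ?case using uniq[of B C a] step B by blast
      qed
    qed
    have fs0: "f s0 \<in> V" using hom s0 unfolding graph_hom_on_def by blast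
    have "f s0 \<in> \<Union>P" using fs0 U by simp
    then obtain B' where B': "B' \<in> P" "f s0 \<in> B'" by (rule UnionE)
    have fSB': "f ` S \<subseteq> B'"
    proof
      fix w assume "w \<in> f ` S"
      then obtain u where u: "u \<in> S" "w = f u" by blast
      show "w \<in> B'"
      proof (cases "u = s0")
        case True
        then have "w = f s0" using u(2) by simp
        then show ?thesis using B'(2) by simp
      next
        case False
        have uB: "u \<in> B" using SB u(1) by blast
        have clB: "\<forall>x\<in>B. \<forall>y\<in>B. x \<noteq> y \<longrightarrow> E x y" using cl B(1) by (rule bspec)
        have "s0 \<noteq> u" using False by simp
        then have "E s0 u" using clB B(2) uB by simp
        then have "E (f s0) (f u)" using hom s0 u(1) unfolding graph_hom_on_def by blast
        then obtain C where C: "C \<in> P" "f s0 \<in> C" "f u \<in> C" using ed by blast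
        have "C = B'" using uniq[OF C(1) B'(1) C(2) B'(2)] .
        then show ?thesis using C(3) u(2) by simp
      qed
    qed
    have injf: "inj_on f S"
    proof (rule inj_onI)
      fix u v assume uv: "u \<in> S" "v \<in> S" "f u = f v"
      show "u = v"
      proof (rule ccontr)
        assume "u \<noteq> v"
        moreover have "u \<in> B" "v \<in> B" using SB uv(1,2) by blast+
        moreover have "\<forall>x\<in>B. \<forall>y\<in>B. x \<noteq> y \<longrightarrow> E x y" using cl B(1) by (rule bspec)
        ultimately have "E u v" by simp
        then have "E (f u) (f v)" using hom uv unfolding graph_hom_on_def by blast
        then show False using uv(3) irr by simp
      qed
    qed
    obtain h where h: "bij_betw h B B'" "\<forall>x\<in>S. h x = f x"
      using extend_bij[OF _ fS SB injf fSB'] eq B(1) B'(1) by meson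
    have BV: "B \<subseteq> V" "B' \<subseteq> V" using B B' U by auto
    show "\<exists>g. graph_aut V E g \<and> (\<forall>x\<in>S. g x = f x)"
    proof (cases "B = B'")
      case True
      define g where "g x = (if x \<in> B then h x else x)" for x
      have e1: "\<forall>x\<in>B. h x = g x" by (simp add: g_def)
      have g1: "bij_betw g B B" using h(1) True bij_betw_cong[of B h g B] e1 by simp
      have e2: "\<forall>x\<in>V - B. id x = g x" by (simp add: g_def)
      have g2: "bij_betw g (V - B) (V - B)"
        using bij_betw_id[of "V - B"] bij_betw_cong[of "V - B" id g] e2 by blast
      have i1: "B \<inter> (V - B) = {}" by blast
      have "bij_betw g (B \<union> (V - B)) (B \<union> (V - B))" by (rule bij_betw_combine[OF g1 g2 i1])
      moreover have "B \<union> (V - B) = V" using BV by auto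
      ultimately have bij: "bij_betw g V V" by simp
      have bl: "\<forall>C\<in>P. g ` C \<in> P"
      proof
        fix C assume C: "C \<in> P"
        show "g ` C \<in> P"
        proof (cases "C = B")
          case True
          have "g ` B = B" using g1 by (simp add: bij_betw_def)
          then show ?thesis using B True by simp
        next
          case False
          then have "C \<inter> B = {}" using dj C B by blast
          then have "\<forall>x\<in>C. g x = x" by (auto simp: g_def)
          then have "g ` C = C" by simp
          then show ?thesis using C by simp
        qed
      qed
      have "graph_aut V E g" by (rule aut_from_blocks[OF sg U dj cl ed bij bl])
      moreover have "\<forall>x\<in>S. g x = f x" using h(2) SB by (auto simp: g_def)
      ultimately show ?thesis by blast
    next
      case False
      define k where "k = inv_into B h"
      have k: "bij_betw k B' B" unfolding k_def using h(1) by (rule bij_betw_inv_into)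
      have dBB: "B \<inter> B' = {}" using dj B B' False by blast
      define g where "g x = (if x \<in> B then h x else if x \<in> B' then k x else x)" for x
      have e1: "\<forall>x\<in>B. h x = g x" by (simp add: g_def)
      have g1: "bij_betw g B B'" using h(1) bij_betw_cong[of B h g B'] e1 by simp
      have e2: "\<forall>x\<in>B'. k x = g x" using dBB by (auto simp: g_def)
      have g2: "bij_betw g B' B" using k bij_betw_cong[of B' k g B] e2 by blast
      have e3: "\<forall>x\<in>V - B - B'. id x = g x" by (auto simp: g_def)
      have g3: "bij_betw g (V - B - B') (V - B - B')"
        using bij_betw_id[of "V - B - B'"] bij_betw_cong[of "V - B - B'" id g] e3 by blast
      have i1: "B \<inter> (V - B - B') = {}" by blast
      have "bij_betw g (B' \<union> (V - B - B')) (B \<union> (V - B - B'))"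
        by (rule bij_betw_combine[OF g2 g3 i1])
      moreover have i2: "B' \<inter> (B \<union> (V - B - B')) = {}" using dBB by blast
      ultimately have "bij_betw g (B \<union> (B' \<union> (V - B - B'))) (B' \<union> (B \<union> (V - B - B')))"
        using bij_betw_combine[OF g1] by blast
      moreover have "B \<union> (B' \<union> (V - B - B')) = V" "B' \<union> (B \<union> (V - B - B')) = V" using BV by auto
      ultimately have bij: "bij_betw g V V" by simp
      have bl: "\<forall>C\<in>P. g ` C \<in> P"
      proof
        fix C assume C: "C \<in> P"
        show "g ` C \<in> P"
        proof (cases "C = B \<or> C = B'")
          case True
          have "g ` B = B'" "g ` B' = B" using g1 g2 by (simp_all add: bij_betw_def)
          then show ?thesis using B B' True by auto
        next
          case False
          then have "C \<inter> B = {}" "C \<inter> B' = {}" using dj C B B' by blast+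
          then have "\<forall>x\<in>C. g x = x" by (auto simp: g_def)
          then have "g ` C = C" by simp
          then show ?thesis using C by simp
        qed
      qed
      have "graph_aut V E g" by (rule aut_from_blocks[OF sg U dj cl ed bij bl])
      moreover have "\<forall>x\<in>S. g x = f x" using h(2) SB by (auto simp: g_def)
      ultimately show ?thesis by blast
    qed
  qed
qed

theorem proposition4p1:
  fixes V :: "'a set" and E :: "'a \<Rightarrow> 'a \<Rightarrow> bool"
  assumes "simple_graph V E" and "countable V"
  shows "C_HI V E \<longleftrightarrow> disjoint_union_of_complete V E"
  using forward[OF assms(1)] backward[OF assms(1)] by blast

end
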